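(* Let $\mathcal{X}$ be a finite set, $\phi\notin\mathcal{X}$ an extra symbol, and $L,T\in\mathbb{N}$. Fix a permutation of $\{0,\dots,L-1\}$ and let $i_0,\dots,i_{T-1}\in\{0,\dots,L-1\}$ be the positions obtained by cycling through this permutation in round-robin fashion. For $t=0,\dots,T-1$ let $\Pi_t$ be a probability distribution on $\mathcal{X}\cup\{\phi\}$. Let $X_0$ be a random element of $\mathcal{X}^L$ with an arbitrary distribution $P^*$, and let $Z_0,\dots,Z_{T-1}$ be independent random variables, independent of $X_0$, with $Z_t\sim\Pi_t$. Define the forward process $X_0,X_1,\dots,X_T$ by: $X_{t+1,j}=X_{t,j}$ for $j\neq i_t$; $X_{t+1,i_t}=X_{t,i_t}$ if $Z_t=\phi$; and $X_{t+1,i_t}=Z_t$ if $Z_t\in\mathcal{X}$. Suppose that the conditional distribution $\Pi_t(\cdot\mid\mathcal{X})$ equals a fixed distribution $\Pi(\cdot\mid\mathcal{X})$ on $\mathcal{X}$ for every $t$, and that there is $\epsilon>0$ with $\Pi_t(\phi)\le 1-\epsilon$ for all $t$. Then $$\mathsf{TV}\big(\mathsf{Law}(X_T),\,\Pi(\cdot\mid\mathcal{X})^{\otimes L}\big)\le L(1-\epsilon)^{\lfloor T/L\rfloor},$$ and in particular $\mathsf{Law}(X_T)$ converges to $\Pi(\cdot\mid\mathcal{X})^{\otimes L}$ in total variation as $T\to\infty$.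
   Context: $\mathsf{TV}$ denotes total variation distance. For a distribution $Q$ on a finite set $\mathcal{Y}$ and $A\subseteq\mathcal{Y}$ with $Q(A)>0$, $Q(\cdot\mid A)$ denotes the conditional distribution of $Q$ on $A$. $X_{t,j}$ denotes the $j$-th coordinate of $X_t\in\mathcal{X}^L$, coordinates indexed by $\{0,\dots,L-1\}$. *)

theory Defs
  imports "HOL-Probability.Probability"
begin

text \<open>States of the chain: lists over 'x of length L (coordinates 0..L-1).
  The extra symbol phi is represented by None in 'x option.\<close>

definition TV :: "'a pmf \<Rightarrow> 'a pmf \<Rightarrow> real" where
  "TV p q = (1/2) * (\<Sum>\<^sub>\<infinity> x. \<bar>pmf p x - pmf q x\<bar>)"

definition rr_pos :: "(nat \<Rightarrow> nat) \<Rightarrow> nat \<Rightarrow> nat \<Rightarrow> nat" where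
  "rr_pos \<sigma> L t = \<sigma> (t mod L)"

definition step :: "nat \<Rightarrow> 'x list \<Rightarrow> 'x option \<Rightarrow> 'x list" where
  "step i x z = (case z of None \<Rightarrow> x | Some a \<Rightarrow> x[i := a])"

primrec fwd_law :: "'x list pmf \<Rightarrow> (nat \<Rightarrow> 'x option pmf) \<Rightarrow> (nat \<Rightarrow> nat) \<Rightarrow> nat \<Rightarrow> nat \<Rightarrow> 'x list pmf" where
  "fwd_law P Pis \<sigma> L 0 = P"
| "fwd_law P Pis \<sigma> L (Suc t) =
     bind_pmf (fwd_law P Pis \<sigma> L t) (\<lambda>x. map_pmf (step (rr_pos \<sigma> L t) x) (Pis t))"

primrec prod_pow :: "nat \<Rightarrow> 'x pmf \<Rightarrow> 'x list pmf" where
  "prod_pow 0 q = return_pmf []"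
| "prod_pow (Suc n) q = bind_pmf q (\<lambda>a. map_pmf (Cons a) (prod_pow n q))"

end

theory Submission
  imports Defs
begin


lemma pis_decomp:
  fixes p :: "'x option pmf"
  assumes a1: "pmf p None < 1"
  shows "p = bind_pmf (bernoulli_pmf (1 - pmf p None))
               (\<lambda>b. if b then map_pmf Some (map_pmf the (cond_pmf p (range Some))) else return_pmf None)"
proof -
  let ?a = "pmf p None"
  have m: "measure p (range Some) = 1 - ?a"
  proof -
    have "measure p (range Some) = measure p (UNIV - {None})"
      by (metis UNIV_option_conv Diff_insert_absorb image_iff option.distinct(1))
    also have "\<dots> = 1 - ?a"
      using measure_pmf.prob_compl[of "{None}" p] by (simp add: measure_pmf_single)
    finally show ?thesis .
  qed
  have ne: "set_pmf p \<inter> range Some \<noteq> {}"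
    using m a1 measure_pmf_zero_iff[of p "range Some"] by auto
  have mm: "map_pmf Some (map_pmf the (cond_pmf p (range Some))) = cond_pmf p (range Some)"
    unfolding pmf.map_comp
    by (rule map_pmf_idI) (use ne in auto)
  show ?thesis
  proof (rule pmf_eqI)
    fix z :: "'x option"
    have a0: "0 \<le> ?a" by simp
    show "pmf p z = pmf (bind_pmf (bernoulli_pmf (1 - ?a))
               (\<lambda>b. if b then map_pmf Some (map_pmf the (cond_pmf p (range Some))) else return_pmf None)) z"
      unfolding mm pmf_bind using a1 a0
      by (cases z) (auto simp: pmf_cond[OF ne] m)
  qed
qed



lemma set_prod_pow: "set_pmf (prod_pow n q) \<subseteq> {xs. length xs = n}"
  by (induction n) auto

lemma prod_pow_upd: "bind_pmf (prod_pow n q) (\<lambda>y. map_pmf (\<lambda>a. y[i:=a]) q) = prod_pow n q"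
proof (induction n arbitrary: i)
  case 0
  have "list_update [] i = (\<lambda>_::'a. [])" by auto
  then show ?case by (simp add: bind_return_pmf)
next
  case (Suc n)
  show ?case
  proof (cases i)
    case 0
    have lu0: "\<And>x xs. list_update (x#xs) 0 = (\<lambda>a. a#xs)" by auto
    have "bind_pmf (prod_pow (Suc n) q) (\<lambda>y. map_pmf (\<lambda>a. y[i:=a]) q)
        = bind_pmf q (\<lambda>b. bind_pmf (prod_pow n q) (\<lambda>ys. map_pmf (\<lambda>a. a # ys) q))"
      using 0 by (simp add: bind_assoc_pmf bind_map_pmf lu0)
    also have "\<dots> = bind_pmf (prod_pow n q) (\<lambda>ys. map_pmf (\<lambda>a. a # ys) q)" by simp
    also have "\<dots> = prod_pow (Suc n) q"
      unfolding map_pmf_def by (simp add: bind_commute_pmf[of "prod_pow n q"] map_pmf_def)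
    finally show ?thesis .
  next
    case (Suc k)
    have luS: "\<And>x xs. list_update (x#xs) (Suc k) = (\<lambda>a. x#xs[k:=a])" by auto
    have "bind_pmf (prod_pow (Suc n) q) (\<lambda>y. map_pmf (\<lambda>a. y[i:=a]) q)
        = bind_pmf q (\<lambda>b. map_pmf (Cons b) (bind_pmf (prod_pow n q) (\<lambda>ys. map_pmf (\<lambda>a. ys[k:=a]) q)))"
      using Suc by (simp add: bind_assoc_pmf bind_map_pmf map_bind_pmf pmf.map_comp o_def luS)
    also have "\<dots> = prod_pow (Suc n) q" using Suc.IH by simp
    finally show ?thesis .
  qed
qed

definition upd :: "nat set \<Rightarrow> 'x list \<Rightarrow> 'x list \<Rightarrow> 'x list" where
  "upd S x y = map (\<lambda>j. if j \<in> S then y!j else x!j) [0..<length x]"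

lemma upd_empty: "upd {} x y = x"
  unfolding upd_def by (simp add: map_nth)

lemma upd_full: "length x = length y \<Longrightarrow> {..<length x} \<subseteq> S \<Longrightarrow> upd S x y = y"
  unfolding upd_def by (auto intro!: nth_equalityI)

lemma upd_insert: "length y = length x \<Longrightarrow> (upd S x y)[i:=a] = upd (insert i S) x (y[i:=a])"
  unfolding upd_def by (cases "i < length x") (auto intro!: nth_equalityI simp: nth_list_update)

lemma refresh:
  assumes "length x = n"
  shows "bind_pmf (map_pmf (upd S x) (prod_pow n q)) (\<lambda>x'. map_pmf (\<lambda>a. x'[i:=a]) q)
       = map_pmf (upd (insert i S) x) (prod_pow n q)"
proof -
  have "bind_pmf (map_pmf (upd S x) (prod_pow n q)) (\<lambda>x'. map_pmf (\<lambda>a. x'[i:=a]) q)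
      = bind_pmf (prod_pow n q) (\<lambda>y. map_pmf (\<lambda>a. upd (insert i S) x (y[i:=a])) q)"
    unfolding bind_map_pmf
    apply (rule bind_pmf_cong, simp)
    apply (rule map_pmf_cong, simp)
    using set_prod_pow assms by (fastforce intro!: upd_insert)
  also have "\<dots> = map_pmf (upd (insert i S) x) (bind_pmf (prod_pow n q) (\<lambda>y. map_pmf (\<lambda>a. y[i:=a]) q))"
    by (simp add: map_bind_pmf pmf.map_comp o_def)
  also have "\<dots> = map_pmf (upd (insert i S) x) (prod_pow n q)" by (simp add: prod_pow_upd)
  finally show ?thesis .
qed



definition resample :: "nat set \<Rightarrow> 'x list pmf \<Rightarrow> nat \<Rightarrow> 'x pmf \<Rightarrow> 'x list pmf" where
  "resample S p n q = bind_pmf p (\<lambda>x. map_pmf (upd S x) (prod_pow n q))"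

primrec rsets :: "(nat \<Rightarrow> 'x option pmf) \<Rightarrow> (nat \<Rightarrow> nat) \<Rightarrow> nat \<Rightarrow> nat \<Rightarrow> nat set pmf" where
  "rsets Pis \<sigma> L 0 = return_pmf {}"
| "rsets Pis \<sigma> L (Suc t) = bind_pmf (rsets Pis \<sigma> L t)
     (\<lambda>S. map_pmf (\<lambda>b. if b then insert (rr_pos \<sigma> L t) S else S) (bernoulli_pmf (1 - pmf (Pis t) None)))"

lemma step_kernel:
  assumes "pmf p None < 1" "map_pmf the (cond_pmf p (range Some)) = q"
  shows "map_pmf (step i x) p = bind_pmf (bernoulli_pmf (1 - pmf p None))
     (\<lambda>b. if b then map_pmf (\<lambda>a. x[i:=a]) q else return_pmf x)"
proof -
  have "map_pmf (step i x) p = map_pmf (step i x) (bind_pmf (bernoulli_pmf (1 - pmf p None))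
               (\<lambda>b. if b then map_pmf Some q else return_pmf None))"
  proof -
    have h: "p = bind_pmf (bernoulli_pmf (1 - pmf p None))
               (\<lambda>b. if b then map_pmf Some q else return_pmf None)"
      using pis_decomp[OF assms(1)] unfolding assms(2) .
    show ?thesis by (rule arg_cong[OF h])
  qed
  also have "\<dots> = bind_pmf (bernoulli_pmf (1 - pmf p None))
     (\<lambda>b. if b then map_pmf (\<lambda>a. x[i:=a]) q else return_pmf x)"
    unfolding map_bind_pmf
    by (rule bind_pmf_cong) (auto simp: pmf.map_comp o_def step_def)
  finally show ?thesis .
qed

lemma fwd_formula:
  assumes P_len: "set_pmf P \<subseteq> {xs. length xs = L}"
    and a1: "\<And>t. pmf (Pis t) None < 1"
    and cond: "\<And>t. map_pmf the (cond_pmf (Pis t) (range Some)) = PiX"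
  shows "fwd_law P Pis \<sigma> L t = bind_pmf (rsets Pis \<sigma> L t) (\<lambda>S. resample S P L PiX)"
proof (induction t)
  case 0
  have e: "\<And>x. upd {} x = (\<lambda>_. x)" using upd_empty by blast
  show ?case by (simp add: e bind_return_pmf resample_def map_pmf_const bind_return_pmf')
next
  case (Suc t)
  define i where "i = rr_pos \<sigma> L t"
  define B where "B = bernoulli_pmf (1 - pmf (Pis t) None)"
  define \<mu> where "\<mu> = prod_pow L PiX"
  have K: "\<And>x. map_pmf (step i x) (Pis t) = bind_pmf B
     (\<lambda>b. if b then map_pmf (\<lambda>a. x[i:=a]) PiX else return_pmf x)"
    unfolding B_def using step_kernel[OF a1 cond] by blast
  have inner: "bind_pmf (map_pmf (upd S x) \<mu>) (\<lambda>x'. map_pmf (step i x') (Pis t))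
      = bind_pmf B (\<lambda>b. map_pmf (upd (if b then insert i S else S) x) \<mu>)"
    if "length x = L" for S x
  proof -
    have "bind_pmf (map_pmf (upd S x) \<mu>) (\<lambda>x'. map_pmf (step i x') (Pis t))
       = bind_pmf B (\<lambda>b. bind_pmf (map_pmf (upd S x) \<mu>)
            (\<lambda>x'. if b then map_pmf (\<lambda>a. x'[i:=a]) PiX else return_pmf x'))"
      unfolding K by (rule bind_commute_pmf)
    also have "\<dots> = bind_pmf B (\<lambda>b. map_pmf (upd (if b then insert i S else S) x) \<mu>)"
      by (rule bind_pmf_cong) (auto simp: refresh[OF that] \<mu>_def bind_return_pmf')
    finally show ?thesis .
  qed
  have "fwd_law P Pis \<sigma> L (Suc t)
      = bind_pmf (rsets Pis \<sigma> L t) (\<lambda>S. bind_pmf P (\<lambda>x.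
          bind_pmf (map_pmf (upd S x) \<mu>) (\<lambda>x'. map_pmf (step i x') (Pis t))))"
    by (simp add: Suc.IH resample_def bind_assoc_pmf i_def \<mu>_def)
  also have "\<dots> = bind_pmf (rsets Pis \<sigma> L t) (\<lambda>S. bind_pmf P (\<lambda>x.
          bind_pmf B (\<lambda>b. map_pmf (upd (if b then insert i S else S) x) \<mu>)))"
    apply (rule bind_pmf_cong, simp)
    apply (rule bind_pmf_cong, simp)
    using P_len inner by auto
  also have "\<dots> = bind_pmf (rsets Pis \<sigma> L t) (\<lambda>S. bind_pmf B (\<lambda>b.
          resample (if b then insert i S else S) P L PiX))"
    unfolding resample_def \<mu>_def by (subst bind_commute_pmf) simp
  also have "\<dots> = bind_pmf (rsets Pis \<sigma> L (Suc t)) (\<lambda>S. resample S P L PiX)"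
    unfolding i_def B_def by (simp add: bind_assoc_pmf bind_map_pmf)
  finally show ?case .
qed



lemma tv_bound:
  assumes F: "finite F" and p: "set_pmf p \<subseteq> F" and q: "set_pmf q \<subseteq> F"
    and low: "\<And>x. c * pmf q x \<le> pmf p x" and c1: "c \<le> 1"
  shows "TV p q \<le> 1 - c"
proof -
  have "(\<Sum>\<^sub>\<infinity> x. \<bar>pmf p x - pmf q x\<bar>) = (\<Sum>\<^sub>\<infinity> x\<in>F. \<bar>pmf p x - pmf q x\<bar>)"
  proof (rule infsum_cong_neutral)
    fix x assume "x \<in> UNIV - F"
    then have "x \<notin> set_pmf p" "x \<notin> set_pmf q" using p q by blast+
    then have "pmf p x = 0" "pmf q x = 0" by (simp_all add: set_pmf_iff)
    then show "\<bar>pmf p x - pmf q x\<bar> = 0" by simp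
  qed simp_all
  also have "\<dots> = (\<Sum>x\<in>F. \<bar>pmf p x - pmf q x\<bar>)" using F by simp
  also have "\<dots> \<le> (\<Sum>x\<in>F. pmf p x - pmf q x + 2 * (1 - c) * pmf q x)"
  proof (rule sum_mono)
    fix x
    have h0: "0 \<le> (1 - c) * pmf q x" using c1 by simp
    have h1: "2 * (1 - c) * pmf q x = 2 * pmf q x - 2 * (c * pmf q x)" by (simp add: algebra_simps)
    show "\<bar>pmf p x - pmf q x\<bar> \<le> pmf p x - pmf q x + 2 * (1 - c) * pmf q x"
      using low[of x] h0 h1 by linarith
  qed
  also have "\<dots> = (\<Sum>x\<in>F. pmf p x) - (\<Sum>x\<in>F. pmf q x) + 2 * (1 - c) * (\<Sum>x\<in>F. pmf q x)"
    by (simp add: sum.distrib sum_subtractf sum_distrib_left)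
  also have "\<dots> = 2 * (1 - c)" using sum_pmf_eq_1[OF F p] sum_pmf_eq_1[OF F q] by simp
  finally show ?thesis unfolding TV_def by simp
qed

lemma measure_bind_pmf: "measure (bind_pmf M f) A = (\<integral>x. measure (f x) A \<partial>M)"
proof -
  have "measure (bind_pmf M f) A = pmf (map_pmf (\<lambda>x. x \<in> A) (bind_pmf M f)) True"
    by (simp add: pmf_map vimage_def)
  also have "\<dots> = (\<integral>x. pmf (map_pmf (\<lambda>x. x \<in> A) (f x)) True \<partial>M)"
    by (simp add: map_bind_pmf pmf_bind)
  also have "\<dots> = (\<integral>x. measure (f x) A \<partial>M)"
    by (simp add: pmf_map vimage_def)
  finally show ?thesis .
qed

lemma miss_bound:
  assumes a0: "\<And>t. pmf (Pis t) None \<le> r" and r0: "0 \<le> r"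
  shows "measure (rsets Pis \<sigma> L T) {S. j \<notin> S} \<le> r ^ card {t. t < T \<and> rr_pos \<sigma> L t = j}"
proof (induction T)
  case 0
  then show ?case by simp
next
  case (Suc T)
  define a where "a = pmf (Pis T) None"
  define i where "i = rr_pos \<sigma> L T"
  have a01: "0 \<le> a" "a \<le> 1" unfolding a_def by (simp_all add: pmf_le_1)
  have mb: "measure (bernoulli_pmf (1 - a)) {b. j \<notin> (if b then insert i S else S)}
        = (if i = j then a else 1) * (if j \<notin> S then 1 else 0)" for S
  proof -
    have "measure (bernoulli_pmf (1 - a)) {b. j \<notin> (if b then insert i S else S)}
       = sum (pmf (bernoulli_pmf (1 - a))) {b. j \<notin> (if b then insert i S else S)}"
      by (rule measure_measure_pmf_finite) simp
    also have "\<dots> = (if i = j then a else 1) * (if j \<notin> S then 1 else 0)"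
    proof (cases "j \<in> S")
      case True then show ?thesis by auto
    next
      case False
      show ?thesis
      proof (cases "i = j")
        case True
        have "{b. j \<notin> (if b then insert i S else S)} = {False}" using True False by auto
        then show ?thesis using True False a01 by simp
      next
        case ne: False
        have "{b. j \<notin> (if b then insert i S else S)} = UNIV" using ne False by auto
        then show ?thesis using ne False a01 by (simp add: UNIV_bool)
      qed
    qed
    finally show ?thesis .
  qed
  have "measure (rsets Pis \<sigma> L (Suc T)) {S. j \<notin> S}
      = (\<integral>S. measure (bernoulli_pmf (1 - a)) {b. j \<notin> (if b then insert i S else S)} \<partial>rsets Pis \<sigma> L T)"
    unfolding a_def i_def by (simp add: measure_bind_pmf vimage_def)
  also have "\<dots> = (\<integral>S. (if i = j then a else 1) * indicator {S. j \<notin> S} S \<partial>rsets Pis \<sigma> L T)"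
    by (rule Bochner_Integration.integral_cong) (auto simp: mb indicator_def)
  also have "\<dots> = (if i = j then a else 1) * measure (rsets Pis \<sigma> L T) {S. j \<notin> S}"
    by simp
  also have "\<dots> \<le> (if i = j then r else 1) * r ^ card {t. t < T \<and> rr_pos \<sigma> L t = j}"
    using Suc.IH a0[of T] a01 r0 unfolding a_def
    by (auto intro!: mult_mono)
  also have "\<dots> = r ^ card {t. t < Suc T \<and> rr_pos \<sigma> L t = j}"
  proof -
    have "{t. t < Suc T \<and> rr_pos \<sigma> L t = j}
        = (if i = j then insert T {t. t < T \<and> rr_pos \<sigma> L t = j} else {t. t < T \<and> rr_pos \<sigma> L t = j})"
      unfolding i_def using less_Suc_eq by auto
    then show ?thesis by simp
  qed
  finally show ?case .
qed



lemma card_visits: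
  assumes perm: "\<sigma> permutes {..<L}" and j: "j < L"
  shows "T div L \<le> card {t. t < T \<and> rr_pos \<sigma> L t = j}"
proof -
  have L0: "L > 0" using j by simp
  obtain r where r0: "j = \<sigma> r" using surjD[OF permutes_surj[OF perm], of j] by blast
  have r: "\<sigma> r = j" using r0 by simp
  have rL: "r < L"
  proof (rule ccontr)
    assume "\<not> r < L"
    then have "\<sigma> r = r" using permutes_not_in[OF perm] by simp
    then show False using r j \<open>\<not> r < L\<close> by simp
  qed
  have sub: "(\<lambda>q. q * L + r) ` {..<T div L} \<subseteq> {t. t < T \<and> rr_pos \<sigma> L t = j}"
  proof
    fix t assume "t \<in> (\<lambda>q. q * L + r) ` {..<T div L}"
    then obtain q where q: "q < T div L" "t = q * L + r" by auto
    have "(q + 1) * L \<le> (T div L) * L" using q(1) by (intro mult_right_mono) auto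
    also have "\<dots> \<le> T" by simp
    finally have "t < T" using q(2) rL by (simp add: algebra_simps)
    moreover have "t mod L = r" using q(2) rL by simp
    ultimately show "t \<in> {t. t < T \<and> rr_pos \<sigma> L t = j}" using r by (simp add: rr_pos_def)
  qed
  have inj: "inj_on (\<lambda>q. q * L + r) {..<T div L}" using L0 by (auto simp: inj_on_def)
  have "T div L = card ((\<lambda>q. q * L + r) ` {..<T div L})" using card_image[OF inj] by simp
  also have "\<dots> \<le> card {t. t < T \<and> rr_pos \<sigma> L t = j}"
    by (rule card_mono[OF _ sub]) simp
  finally show ?thesis .
qed

lemma set_fwd: "set_pmf P \<subseteq> {xs. length xs = L} \<Longrightarrow> set_pmf (fwd_law P Pis \<sigma> L T) \<subseteq> {xs. length xs = L}"
  by (induction T) (auto simp: step_def split: option.splits)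

lemma resample_full:
  assumes "set_pmf P \<subseteq> {xs. length xs = L}" "{..<L} \<subseteq> S"
  shows "resample S P L q = prod_pow L q"
proof -
  have "resample S P L q = bind_pmf P (\<lambda>x. map_pmf id (prod_pow L q))"
    unfolding resample_def
    apply (rule bind_pmf_cong, simp)
    apply (rule map_pmf_cong, simp)
    using assms set_prod_pow by (fastforce intro!: upd_full)
  then show ?thesis by simp
qed

lemma lower:
  fixes M :: "nat set pmf"
  assumes P_len: "set_pmf P \<subseteq> {xs. length xs = L}"
  shows "measure M {S. {..<L} \<subseteq> S} * pmf (prod_pow L q) xs
      \<le> pmf (bind_pmf M (\<lambda>S. resample S P L q)) xs"
proof -
  have "measure M {S. {..<L} \<subseteq> S} * pmf (prod_pow L q) xs
      = (\<integral>S. indicator {S. {..<L} \<subseteq> S} S * pmf (prod_pow L q) xs \<partial>M)"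
    by simp
  also have "\<dots> \<le> (\<integral>S. pmf (resample S P L q) xs \<partial>M)"
  proof (rule integral_mono)
    show "integrable M (\<lambda>S. indicator {S. {..<L} \<subseteq> S} S * pmf (prod_pow L q) xs)"
      by (rule measure_pmf.integrable_const_bound[where B=1]) (auto simp: indicator_def pmf_le_1)
    show "integrable M (\<lambda>S. pmf (resample S P L q) xs)"
      by (rule measure_pmf.integrable_const_bound[where B=1]) (auto simp: pmf_le_1)
    fix S
    show "indicator {S. {..<L} \<subseteq> S} S * pmf (prod_pow L q) xs \<le> pmf (resample S P L q) xs"
      using resample_full[OF P_len] by (auto simp: indicator_def)
  qed
  also have "\<dots> = pmf (bind_pmf M (\<lambda>S. resample S P L q)) xs" by (simp add: pmf_bind)
  finally show ?thesis .
qed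



theorem lemma1:
  fixes P :: "'x::finite list pmf"
    and Pis :: "nat \<Rightarrow> 'x option pmf"
    and PiX :: "'x pmf"
    and \<sigma> :: "nat \<Rightarrow> nat"
    and L :: nat and \<epsilon> :: real
  assumes perm: "\<sigma> permutes {..<L}"
    and P_len: "set_pmf P \<subseteq> {xs. length xs = L}"
    and eps: "\<epsilon> > 0"
    and phi: "\<And>t. pmf (Pis t) None \<le> 1 - \<epsilon>"
    and cond: "\<And>t. map_pmf the (cond_pmf (Pis t) (range Some)) = PiX"
  shows "(\<forall>T. TV (fwd_law P Pis \<sigma> L T) (prod_pow L PiX)
              \<le> real L * (1 - \<epsilon>) ^ (T div L))
         \<and> (\<lambda>T. TV (fwd_law P Pis \<sigma> L T) (prod_pow L PiX)) \<longlonglongrightarrow> 0"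
proof -
  have e1: "\<epsilon> \<le> 1" using phi[of 0] pmf_nonneg[of "Pis 0" None] by linarith
  have a1: "pmf (Pis t) None < 1" for t using phi[of t] eps by linarith
  define F where "F = {xs :: 'x list. length xs = L}"
  have finF: "finite F"
    using finite_lists_length_eq[of "UNIV :: 'x set" L] unfolding F_def by simp
  have bound: "TV (fwd_law P Pis \<sigma> L T) (prod_pow L PiX) \<le> real L * (1 - \<epsilon>) ^ (T div L)" for T
  proof -
    define M where "M = rsets Pis \<sigma> L T"
    define Full where "Full = {S. {..<L} \<subseteq> S}"
    have fw: "fwd_law P Pis \<sigma> L T = bind_pmf M (\<lambda>S. resample S P L PiX)"
      unfolding M_def by (rule fwd_formula[OF P_len a1 cond])
    have "TV (fwd_law P Pis \<sigma> L T) (prod_pow L PiX) \<le> 1 - measure M Full"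
    proof (rule tv_bound[OF finF])
      show "set_pmf (fwd_law P Pis \<sigma> L T) \<subseteq> F" unfolding F_def by (rule set_fwd[OF P_len])
      show "set_pmf (prod_pow L PiX) \<subseteq> F" unfolding F_def by (rule set_prod_pow)
      show "measure M Full * pmf (prod_pow L PiX) x \<le> pmf (fwd_law P Pis \<sigma> L T) x" for x
        unfolding fw Full_def by (rule lower[OF P_len])
      show "measure M Full \<le> 1" by simp
    qed
    also have "1 - measure M Full = measure M (UNIV - Full)"
      using measure_pmf.prob_compl[of Full M] by simp
    also have "UNIV - Full = (\<Union>j\<in>{..<L}. {S. j \<notin> S})" unfolding Full_def by auto
    also have "measure M (\<Union>j\<in>{..<L}. {S. j \<notin> S}) \<le> (\<Sum>j\<in>{..<L}. measure M {S. j \<notin> S})"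
      by (rule measure_pmf.finite_measure_subadditive_finite) auto
    also have "\<dots> \<le> (\<Sum>j\<in>{..<L}. (1 - \<epsilon>) ^ (T div L))"
    proof (rule sum_mono)
      fix j assume j: "j \<in> {..<L}"
      have "measure M {S. j \<notin> S} \<le> (1 - \<epsilon>) ^ card {t. t < T \<and> rr_pos \<sigma> L t = j}"
        unfolding M_def by (rule miss_bound) (use phi e1 in auto)
      also have "\<dots> \<le> (1 - \<epsilon>) ^ (T div L)"
        by (rule power_decreasing) (use card_visits[OF perm, of j T] j eps e1 in auto)
      finally show "measure M {S. j \<notin> S} \<le> (1 - \<epsilon>) ^ (T div L)" .
    qed
    also have "\<dots> = real L * (1 - \<epsilon>) ^ (T div L)" by simp
    finally show ?thesis .
  qed
  have lim: "(\<lambda>T. real L * (1 - \<epsilon>) ^ (T div L)) \<longlonglongrightarrow> 0"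
  proof (cases "L = 0")
    case True then show ?thesis by simp
  next
    case False
    have d: "filterlim (\<lambda>T. T div L) at_top sequentially"
      unfolding filterlim_at_top
    proof (intro allI)
      fix Z
      show "eventually (\<lambda>T. Z \<le> T div L) sequentially"
        unfolding eventually_sequentially
      proof (rule exI[of _ "Z * L"], intro allI impI)
        fix T assume "Z * L \<le> T"
        then have "Z * L div L \<le> T div L" by (rule div_le_mono)
        then show "Z \<le> T div L" using False by simp
      qed
    qed
    have "(\<lambda>n. (1 - \<epsilon>) ^ n) \<longlonglongrightarrow> 0"
      by (rule LIMSEQ_power_zero) (use eps e1 in auto)
    then have "(\<lambda>T. (1 - \<epsilon>) ^ (T div L)) \<longlonglongrightarrow> 0"
      using filterlim_compose[OF _ d] by blast
    then show ?thesis using tendsto_mult_right_zero by blast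
  qed
  have nn: "0 \<le> TV (fwd_law P Pis \<sigma> L T) (prod_pow L PiX)" for T
    unfolding TV_def by (simp add: infsum_nonneg)
  show ?thesis
  proof
    show "\<forall>T. TV (fwd_law P Pis \<sigma> L T) (prod_pow L PiX) \<le> real L * (1 - \<epsilon>) ^ (T div L)"
      using bound by blast
    show "(\<lambda>T. TV (fwd_law P Pis \<sigma> L T) (prod_pow L PiX)) \<longlonglongrightarrow> 0"
      by (rule tendsto_sandwich[OF _ _ tendsto_const lim]) (use nn bound in auto)
  qed
qed

end
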